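(* Let $G$ be a graph of order $n\geq 3$ with no full vertex (i.e., no vertex of degree $n-1$). Then $\mathcal{C}_f(G)\geq 2\,d_f(G)$.
   Context: All graphs are finite and simple; $G=(V,E)$, $N(v)$ is the open neighborhood of $v$. A dominating set is $D\subseteq V$ such that every vertex of $V\setminus D$ has a neighbor in $D$. For an integer $k\geq 1$, a $k$-fair dominating set ($kFD$-set) is a dominating set $D$ such that $|N(v)\cap D|=k$ for every $v\in V\setminus D$. A fair dominating set (FD-set) is a $kFD$-set for some integer $k\geq 1$. A fair domatic partition of $G$ is a partition of $V$ into fair dominating sets; the fair domatic number $d_f(G)$ is the maximum number of parts of a fair domatic partition. A fair coalition consists of two disjoint sets $A_1,A_2\subseteq V$, neither of which is a fair dominating set, such that $A_1\cup A_2$ is a fair dominating set. A fair coalition partition ($fc$-partition) of $G$ is a partition $\Upsilon=\{A_1,\dots,A_k\}$ of $V$ such that every $A_i$ is either a singleton fair dominating set of $G$, or is not a fair dominating set and forms a fair coalition with some other non-fair-dominating set $A_j\in\Upsilon$. The fair coalition number $\mathcal{C}_f(G)$ is the maximum number of parts of an $fc$-partition of $G$. *)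

theory Defs
  imports Main "HOL-Library.Disjoint_Sets"
begin

definition simple_graph :: "'a set \<Rightarrow> ('a \<Rightarrow> 'a \<Rightarrow> bool) \<Rightarrow> bool" where
  "simple_graph V E \<longleftrightarrow> finite V \<and>
     (\<forall>u v. E u v \<longrightarrow> u \<in> V \<and> v \<in> V \<and> u \<noteq> v \<and> E v u)"

definition nbhd :: "'a set \<Rightarrow> ('a \<Rightarrow> 'a \<Rightarrow> bool) \<Rightarrow> 'a \<Rightarrow> 'a set" where
  "nbhd V E v = {u \<in> V. E v u}"

definition dominating_set :: "'a set \<Rightarrow> ('a \<Rightarrow> 'a \<Rightarrow> bool) \<Rightarrow> 'a set \<Rightarrow> bool" where
  "dominating_set V E D \<longleftrightarrow> D \<subseteq> V \<and> (\<forall>v \<in> V - D. \<exists>u \<in> D. E v u)"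

definition k_fair_dominating :: "'a set \<Rightarrow> ('a \<Rightarrow> 'a \<Rightarrow> bool) \<Rightarrow> nat \<Rightarrow> 'a set \<Rightarrow> bool" where
  "k_fair_dominating V E k D \<longleftrightarrow> dominating_set V E D \<and>
     (\<forall>v \<in> V - D. card (nbhd V E v \<inter> D) = k)"

definition fair_dominating :: "'a set \<Rightarrow> ('a \<Rightarrow> 'a \<Rightarrow> bool) \<Rightarrow> 'a set \<Rightarrow> bool" where
  "fair_dominating V E D \<longleftrightarrow> (\<exists>k \<ge> 1. k_fair_dominating V E k D)"

definition fair_domatic_partition :: "'a set \<Rightarrow> ('a \<Rightarrow> 'a \<Rightarrow> bool) \<Rightarrow> 'a set set \<Rightarrow> bool" where
  "fair_domatic_partition V E P \<longleftrightarrow> partition_on V P \<and> (\<forall>A \<in> P. fair_dominating V E A)"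

definition fair_domatic_number :: "'a set \<Rightarrow> ('a \<Rightarrow> 'a \<Rightarrow> bool) \<Rightarrow> nat" where
  "fair_domatic_number V E = Max {card P | P. fair_domatic_partition V E P}"

definition fair_coalition :: "'a set \<Rightarrow> ('a \<Rightarrow> 'a \<Rightarrow> bool) \<Rightarrow> 'a set \<Rightarrow> 'a set \<Rightarrow> bool" where
  "fair_coalition V E A1 A2 \<longleftrightarrow> A1 \<inter> A2 = {} \<and>
     \<not> fair_dominating V E A1 \<and> \<not> fair_dominating V E A2 \<and> fair_dominating V E (A1 \<union> A2)"

definition fc_partition :: "'a set \<Rightarrow> ('a \<Rightarrow> 'a \<Rightarrow> bool) \<Rightarrow> 'a set set \<Rightarrow> bool" where
  "fc_partition V E P \<longleftrightarrow> partition_on V P \<and>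
     (\<forall>A \<in> P. (fair_dominating V E A \<and> card A = 1) \<or>
               (\<not> fair_dominating V E A \<and> (\<exists>B \<in> P. fair_coalition V E A B)))"

definition fair_coalition_number :: "'a set \<Rightarrow> ('a \<Rightarrow> 'a \<Rightarrow> bool) \<Rightarrow> nat" where
  "fair_coalition_number V E = Max {card P | P. fc_partition V E P}"

end

theory Submission
  imports Defs
begin

lemma fd_sub: "fair_dominating V E D \<Longrightarrow> D \<subseteq> V"
  by (auto simp: fair_dominating_def k_fair_dominating_def dominating_set_def)

lemma fd_V: "fair_dominating V E V"
  unfolding fair_dominating_def k_fair_dominating_def dominating_set_def by auto

lemma fd_ne: "V \<noteq> {} \<Longrightarrow> fair_dominating V E D \<Longrightarrow> D \<noteq> {}"
  by (auto simp: fair_dominating_def k_fair_dominating_def dominating_set_def)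

lemma nofull:
  assumes g: "simple_graph V E" and nf: "\<forall>v \<in> V. card (nbhd V E v) \<noteq> card V - 1"
    and a: "a \<in> V"
  shows "\<exists>u\<in>V. u \<noteq> a \<and> \<not> E a u"
proof (rule ccontr)
  assume "\<not> ?thesis"
  hence "nbhd V E a = V - {a}" using g a by (auto simp: nbhd_def simple_graph_def)
  hence "card (nbhd V E a) = card V - 1" using g a by (simp add: simple_graph_def)
  thus False using nf a by auto
qed

lemma single_not_fd:
  assumes g: "simple_graph V E" and nf: "\<forall>v \<in> V. card (nbhd V E v) \<noteq> card V - 1"
  shows "\<not> fair_dominating V E {a}"
proof
  assume fd: "fair_dominating V E {a}"
  hence a: "a \<in> V" using fd_sub by blast
  then obtain u where u: "u \<in> V" "u \<noteq> a" "\<not> E a u" using nofull[OF g nf] by blast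
  hence "\<not> E u a" using g by (auto simp: simple_graph_def)
  thus False using fd u by (auto simp: fair_dominating_def k_fair_dominating_def dominating_set_def)
qed

lemma key:
  assumes g: "simple_graph V E" and nf: "\<forall>v \<in> V. card (nbhd V E v) \<noteq> card V - 1"
    and fD: "fair_dominating V E D" and fD': "fair_dominating V E D'" and dj: "D \<inter> D' = {}"
    and ne: "V \<noteq> {}"
  shows "\<exists>a\<in>D. \<not> fair_dominating V E (D - {a})"
proof (rule ccontr)
  assume "\<not> ?thesis"
  hence all: "\<And>a. a \<in> D \<Longrightarrow> fair_dominating V E (D - {a})" by blast
  have fin: "finite V" using g by (simp add: simple_graph_def)
  have DV: "D \<subseteq> V" "D' \<subseteq> V" using fD fD' fd_sub by blast+
  have finD: "finite D" using DV fin finite_subset by blast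
  obtain k where k: "k \<ge> 1" "\<And>v. v \<in> V - D \<Longrightarrow> card (nbhd V E v \<inter> D) = k"
    using fD by (auto simp: fair_dominating_def k_fair_dominating_def)
  have domD': "\<And>v. v \<in> V - D' \<Longrightarrow> \<exists>u \<in> D'. E v u"
    using fD' by (auto simp: fair_dominating_def k_fair_dominating_def dominating_set_def)
  have sym: "\<And>u v. E u v \<Longrightarrow> E v u" and inV: "\<And>u v. E u v \<Longrightarrow> u \<in> V \<and> v \<in> V \<and> u \<noteq> v"
    using g by (auto simp: simple_graph_def)
  obtain x where x: "x \<in> D'" using fd_ne[OF ne fD'] by blast
  have xV: "x \<in> V - D" using x DV dj by blast
  have adj: "\<And>a y. a \<in> D \<Longrightarrow> y \<in> V - D \<Longrightarrow> E y a"
  proof (rule ccontr)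
    fix a y assume a: "a \<in> D" and y: "y \<in> V - D" and n: "\<not> E y a"
    obtain j where j: "\<And>v. v \<in> V - (D - {a}) \<Longrightarrow> card (nbhd V E v \<inter> (D - {a})) = j"
      using all[OF a] by (auto simp: fair_dominating_def k_fair_dominating_def)
    obtain y0 where y0: "y0 \<in> D'" "E a y0" using domD'[of a] a DV dj by blast
    have y0V: "y0 \<in> V - D" using y0 DV dj by blast
    have "nbhd V E y \<inter> (D - {a}) = nbhd V E y \<inter> D" using n by (auto simp: nbhd_def)
    hence "j = k" using j[of y] k(2)[of y] y by auto
    have "nbhd V E y0 \<inter> (D - {a}) = (nbhd V E y0 \<inter> D) - {a}" by auto
    moreover have "a \<in> nbhd V E y0 \<inter> D" using a y0 sym inV by (auto simp: nbhd_def)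
    ultimately have "card (nbhd V E y0 \<inter> (D - {a})) = k - 1"
      using k(2)[OF y0V] finD by (simp add: card_Diff_singleton)
    hence "j = k - 1" using j[of y0] y0V by auto
    thus False using \<open>j = k\<close> k(1) by simp
  qed
  have "nbhd V E x \<inter> D = D" using adj xV DV sym by (auto simp: nbhd_def)
  hence kD: "k = card D" using k(2)[OF xV] by simp
  obtain a where a: "a \<in> D" using fd_ne[OF ne fD] by blast
  obtain j where j: "\<And>v. v \<in> V - (D - {a}) \<Longrightarrow> card (nbhd V E v \<inter> (D - {a})) = j"
    using all[OF a] by (auto simp: fair_dominating_def k_fair_dominating_def)
  have "nbhd V E x \<inter> (D - {a}) = D - {a}" using adj xV DV sym by (auto simp: nbhd_def)
  hence "j = card (D - {a})" using j[of x] xV by auto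
  moreover have "card (nbhd V E a \<inter> (D - {a})) = j" using j[of a] a DV by auto
  ultimately have "card (nbhd V E a \<inter> (D - {a})) = card (D - {a})" by simp
  hence "nbhd V E a \<inter> (D - {a}) = D - {a}"
    using finD by (meson Int_lower2 card_subset_eq finite_Diff)
  hence "\<forall>u\<in>V. u \<noteq> a \<longrightarrow> E a u"
    using adj a sym by (auto simp: nbhd_def)
  thus False using nofull[OF g nf] a DV by blast
qed

lemma two_split:
  assumes "A \<noteq> {}" "B \<noteq> {}" "A \<inter> B = {}" "A \<union> B = V"
    "\<not> fair_dominating V E A" "\<not> fair_dominating V E B"
  shows "fc_partition V E {A, B}" "card {A, B} = 2"
proof -
  have "A \<noteq> B" using assms by auto
  thus "card {A, B} = 2" by simp
  have fc: "fair_coalition V E A B" "fair_coalition V E B A"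
    using assms fd_V[of V E] unfolding fair_coalition_def by (simp_all add: Int_commute Un_commute)
  have "partition_on V {A, B}"
    using assms by (intro partition_onI) (auto simp: disjnt_def Int_commute)
  moreover have "\<And>X. X \<in> {A,B} \<Longrightarrow> \<not> fair_dominating V E X \<and> (\<exists>Y\<in>{A,B}. fair_coalition V E X Y)"
    using fc assms(5,6) by auto
  ultimately show "fc_partition V E {A, B}" unfolding fc_partition_def by simp
qed

lemma min_fd:
  assumes g: "simple_graph V E"
  obtains M where "fair_dominating V E M"
    "\<And>a. a \<in> M \<Longrightarrow> \<not> fair_dominating V E (M - {a})"
proof -
  obtain M where M: "fair_dominating V E M"
    "\<And>S. fair_dominating V E S \<Longrightarrow> card M \<le> card S"
    using ex_has_least_nat[of "fair_dominating V E" V card, OF fd_V] by auto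
  have "M \<subseteq> V" using M(1) by (rule fd_sub)
  hence "finite M" using g finite_subset unfolding simple_graph_def by auto
  hence "\<And>a. a \<in> M \<Longrightarrow> \<not> fair_dominating V E (M - {a})"
  proof -
    fix a assume "finite M" "a \<in> M"
    hence "card (M - {a}) < card M" by (rule card_Diff1_less)
    thus "\<not> fair_dominating V E (M - {a})" using M(2)[of "M - {a}"] by linarith
  qed
  thus ?thesis using M(1) that by blast
qed

theorem theorem2p4:
  fixes V :: "'a set" and E :: "'a \<Rightarrow> 'a \<Rightarrow> bool"
  assumes "simple_graph V E"
    and "card V \<ge> 3"
    and "\<forall>v \<in> V. card (nbhd V E v) \<noteq> card V - 1"
  shows "fair_coalition_number V E \<ge> 2 * fair_domatic_number V E"
proof -
  note g = assms(1) and nf = assms(3)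
  have fin: "finite V" using g by (simp add: simple_graph_def)
  have ne: "V \<noteq> {}" using assms(2) by auto
  let ?Sd = "{card P |P. fair_domatic_partition V E P}"
  let ?Sf = "{card P |P. fc_partition V E P}"
  have "?Sd \<subseteq> card ` {P. partition_on V P}"
    by (auto simp: fair_domatic_partition_def)
  hence finSd: "finite ?Sd" using finitely_many_partition_on[OF fin] finite_subset by blast
  have "?Sf \<subseteq> card ` {P. partition_on V P}"
    by (auto simp: fc_partition_def)
  hence finSf: "finite ?Sf" using finitely_many_partition_on[OF fin] finite_subset by blast
  have "fair_domatic_partition V E {V}"
    using partition_on_space[OF ne] fd_V[of V E] by (simp add: fair_domatic_partition_def)
  hence "card {V} \<in> ?Sd" by blast
  hence "Max ?Sd \<in> ?Sd" using finSd Max_in by blast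
  then obtain P where P: "fair_domatic_partition V E P" "card P = fair_domatic_number V E"
    unfolding fair_domatic_number_def by auto
  have partP: "partition_on V P" and fdP: "\<And>D. D \<in> P \<Longrightarrow> fair_dominating V E D"
    using P(1) by (auto simp: fair_domatic_partition_def)
  have maxP: "\<And>P'. fair_domatic_partition V E P' \<Longrightarrow> card P' \<le> card P"
    using P(2) finSd unfolding fair_domatic_number_def by (auto intro: Max_ge)
  have disjP: "\<And>D D' x. D \<in> P \<Longrightarrow> D' \<in> P \<Longrightarrow> x \<in> D \<Longrightarrow> x \<in> D' \<Longrightarrow> D = D'"
    using partition_onD2[OF partP] by (auto simp: disjoint_def)
  have finP: "finite P" using finite_elements[OF fin partP] .
  have main: "\<exists>Q. fc_partition V E Q \<and> 2 * card P \<le> card Q"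
  proof (cases "card P \<ge> 2")
    case True
    have ex: "\<exists>a\<in>D. \<not> fair_dominating V E (D - {a})" if D: "D \<in> P" for D
    proof -
      have "\<not> P \<subseteq> {D}"
      proof
        assume "P \<subseteq> {D}"
        hence "card P \<le> card {D}" by (intro card_mono) auto
        thus False using True by simp
      qed
      then obtain D' where D': "D' \<in> P" "D' \<noteq> D" by blast
      have "D \<inter> D' = {}" using disjP[OF D D'(1)] D'(2) by blast
      thus ?thesis using key[OF g nf fdP[OF D] fdP[OF D'(1)] _ ne] by blast
    qed
    define f where "f D = (SOME a. a \<in> D \<and> \<not> fair_dominating V E (D - {a}))" for D
    have f: "f D \<in> D \<and> \<not> fair_dominating V E (D - {f D})" if "D \<in> P" for D
      unfolding f_def using someI_ex[OF ex[OF that, unfolded Bex_def]] .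
    have Dsub: "D \<subseteq> V" if "D \<in> P" for D using partition_onD1[OF partP] that by blast
    have big: "D - {f D} \<noteq> {}" if D: "D \<in> P" for D
    proof
      assume "D - {f D} = {}"
      hence "D = {f D}" using f[OF D] by blast
      thus False using fdP[OF D] single_not_fd[OF g nf] by metis
    qed
    define S1 where "S1 = (\<lambda>D. {f D}) ` P"
    define S2 where "S2 = (\<lambda>D. D - {f D}) ` P"
    have c1: "card S1 = card P" unfolding S1_def
    proof (rule card_image, rule inj_onI)
      fix D D' assume D: "D \<in> P" "D' \<in> P" "{f D} = {f D'}"
      thus "D = D'" using f disjP by (metis singleton_inject)
    qed
    have c2: "card S2 = card P" unfolding S2_def
    proof (rule card_image, rule inj_onI)
      fix D D' assume D: "D \<in> P" "D' \<in> P" "D - {f D} = D' - {f D'}"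
      then obtain x where "x \<in> D - {f D}" using big by blast
      thus "D = D'" using D disjP by blast
    qed
    have dj12: "S1 \<inter> S2 = {}"
    proof (rule ccontr)
      assume "S1 \<inter> S2 \<noteq> {}"
      then obtain D D' where D: "D \<in> P" "D' \<in> P" "{f D} = D' - {f D'}"
        unfolding S1_def S2_def by blast
      hence "f D \<in> D'" by blast
      hence "D = D'" using disjP D f by blast
      thus False using D by blast
    qed
    define Q where "Q = S1 \<union> S2"
    have cQ: "card Q = 2 * card P" unfolding Q_def
      using card_Un_disjoint[of S1 S2] dj12 c1 c2 finP unfolding S1_def S2_def by simp
    have Qform: "\<exists>D\<in>P. X = {f D} \<or> X = D - {f D}" if "X \<in> Q" for X
      using that unfolding Q_def S1_def S2_def by blast
    have inQ: "{f D} \<in> Q" "D - {f D} \<in> Q" if "D \<in> P" for D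
      using that unfolding Q_def S1_def S2_def by blast+
    have partQ: "partition_on V Q"
    proof (rule partition_onI)
      show "\<Union>Q = V"
      proof
        show "\<Union>Q \<subseteq> V" using Qform Dsub f by blast
        show "V \<subseteq> \<Union>Q"
        proof
          fix x assume "x \<in> V"
          then obtain D where D: "D \<in> P" "x \<in> D" using partition_onD1[OF partP] by blast
          show "x \<in> \<Union>Q"
          proof (cases "x = f D")
            case True thus ?thesis using inQ(1)[OF D(1)] by blast
          next
            case False thus ?thesis using inQ(2)[OF D(1)] D(2) by blast
          qed
        qed
      qed
      show "{} \<notin> Q" using Qform big by blast
      fix p q assume pq: "p \<in> Q" "q \<in> Q" "p \<noteq> q"
      show "disjnt p q"
      proof (rule ccontr)
        assume "\<not> disjnt p q"
        then obtain x where x: "x \<in> p" "x \<in> q" by (auto simp: disjnt_def)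
        obtain D where D: "D \<in> P" "p = {f D} \<or> p = D - {f D}" using Qform[OF pq(1)] by blast
        obtain D' where D': "D' \<in> P" "q = {f D'} \<or> q = D' - {f D'}" using Qform[OF pq(2)] by blast
        have "x \<in> D" "x \<in> D'" using x D D' f by auto
        hence "D = D'" using disjP D D' by blast
        thus False using D D' pq(3) x by auto
      qed
    qed
    have fcQ0: "\<not> fair_dominating V E X \<and> (\<exists>B\<in>Q. fair_coalition V E X B)" if X: "X \<in> Q" for X
    proof -
      obtain D where D: "D \<in> P" "X = {f D} \<or> X = D - {f D}" using Qform[OF X] by blast
      have n1: "\<not> fair_dominating V E {f D}" using single_not_fd[OF g nf] .
      have n2: "\<not> fair_dominating V E (D - {f D})" using f[OF D(1)] by blast
      have u: "{f D} \<union> (D - {f D}) = D" "(D - {f D}) \<union> {f D} = D" using f[OF D(1)] by auto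
      have c1: "fair_coalition V E {f D} (D - {f D})"
        unfolding fair_coalition_def using n1 n2 u fdP[OF D(1)] by simp
      have c2: "fair_coalition V E (D - {f D}) {f D}"
        unfolding fair_coalition_def using n1 n2 u fdP[OF D(1)] by simp
      show "\<not> fair_dominating V E X \<and> (\<exists>B\<in>Q. fair_coalition V E X B)"
        using D n1 n2 c1 c2 inQ[OF D(1)] by blast
    qed
    have fcQ: "fc_partition V E Q"
      unfolding fc_partition_def using partQ fcQ0 by blast
    show ?thesis using fcQ cQ by auto
  next
    case False
    hence cP: "card P \<le> 1" by simp
    obtain M where M: "fair_dominating V E M"
      "\<And>a. a \<in> M \<Longrightarrow> \<not> fair_dominating V E (M - {a})" using min_fd[OF g] by blast
    obtain a where a: "a \<in> M" using fd_ne[OF ne M(1)] by blast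
    have MV: "M \<subseteq> V" using fd_sub[OF M(1)] .
    have Ma: "M - {a} \<noteq> {}"
    proof
      assume "M - {a} = {}"
      hence "M = {a}" using a by blast
      thus False using M(1) single_not_fd[OF g nf] by metis
    qed
    have na: "\<not> fair_dominating V E {a}" using single_not_fd[OF g nf] .
    have "\<exists>Q. fc_partition V E Q \<and> 2 \<le> card Q"
    proof (cases "V - M = {}")
      case True
      hence "M = V" using MV by blast
      moreover have "{a} \<union> (V - {a}) = V" using a MV by blast
      ultimately show ?thesis using two_split[of "{a}" "V - {a}" V E] Ma na M(2)[OF a] by auto
    next
      case RF: False
      define R where "R = V - M"
      have nR: "\<not> fair_dominating V E R"
      proof
        assume fR: "fair_dominating V E R"
        have "M \<noteq> R" using a unfolding R_def by blast
        have "partition_on V {M, R}"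
          using MV RF \<open>M \<noteq> R\<close> fd_ne[OF ne M(1)] unfolding R_def
          by (intro partition_onI) (auto simp: disjnt_def)
        hence "fair_domatic_partition V E {M, R}"
          using M(1) fR by (simp add: fair_domatic_partition_def)
        hence "card {M, R} \<le> 1" using maxP cP by fastforce
        thus False using \<open>M \<noteq> R\<close> by simp
      qed
      show ?thesis
      proof (cases "fair_dominating V E (insert a R)")
        case False
        have "M - {a} \<union> insert a R = V" using a MV unfolding R_def by blast
        moreover have "(M - {a}) \<inter> insert a R = {}" unfolding R_def by blast
        ultimately show ?thesis using two_split[of "M - {a}" "insert a R" V E] Ma False M(2)[OF a]
          unfolding R_def by auto
      next
        case True
        define Q where "Q = {{a}, M - {a}, R}"
        have d1: "{a} \<noteq> M - {a}" "{a} \<noteq> R" "M - {a} \<noteq> R"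
          using Ma a RF unfolding R_def by blast+
        hence cQ: "card Q = 3" unfolding Q_def by simp
        have partQ: "partition_on V Q"
          unfolding Q_def using a MV Ma RF d1 unfolding R_def
          by (intro partition_onI) (auto simp: disjnt_def)
        have u1: "{a} \<union> (M - {a}) = M" "(M - {a}) \<union> {a} = M" "R \<union> {a} = insert a R"
          using a by auto
        have c1: "fair_coalition V E {a} (M - {a})" "fair_coalition V E (M - {a}) {a}"
          "fair_coalition V E R {a}"
          unfolding fair_coalition_def using u1 na M(1) M(2)[OF a] nR True
          unfolding R_def by auto
        have "fc_partition V E Q"
          unfolding fc_partition_def Q_def
          using partQ c1 na M(2)[OF a] nR unfolding Q_def by auto
        thus ?thesis using cQ by auto
      qed
    qed
    thus ?thesis using cP by auto
  qed
  then obtain Q where Q: "fc_partition V E Q" "2 * card P \<le> card Q" by blast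
  have "card Q \<in> ?Sf" using Q(1) by blast
  hence "card Q \<le> fair_coalition_number V E"
    unfolding fair_coalition_number_def using finSf by (rule Max_ge[rotated])
  thus ?thesis using Q(2) P(2) by simp
qed

end
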